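(* Let $f:\mathbb{F}_2^{\,n}\to\mathbb{R}$, $s\ge1$, $0<\epsilon\le 1/2$, and let $d$ satisfy $2^d=\frac{2s}{\epsilon^4}$. Let $H\le\mathbb{F}_2^{\,n}$ be a uniformly random subspace of codimension $d$. Let $\mathcal E_1\ge\mathcal E_2\ge\dots\ge\mathcal E_{2^n}$ be the energies $\hat f(\alpha)^2$ of the $2^n$ Fourier coefficients of $f$ in non-increasing order, and let $y_1\ge y_2\ge\dots\ge y_{2^d}$ be the energies of the $2^d$ cosets of $H$ in non-increasing order. Then $$\Pr_H\left[\sum_{i=1}^s (y_i-\mathcal E_i)\le 5\epsilon^2\|f\|_2^2\right]\ge\frac{15}{16}.$$
   Context: $\hat f(\alpha)=\frac{1}{2^n}\sum_x f(x)(-1)^{\alpha\cdot x}$, $\|f\|_2^2=\frac{1}{2^n}\sum_xf(x)^2$. The energy of a coset $a+H$ is $\sum_{\beta\in a+H}\hat f(\beta)^2$. *)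

theory Defs
  imports "HOL-Library.Multiset" "HOL-Probability.Probability_Mass_Function"
begin

text \<open>We model F_2^n, for n = CARD('n), as the type of subsets of a finite
  index type 'n (a vector is identified with its support). Addition in F_2^n
  is symmetric difference, the zero vector is the empty set, and the inner
  product alpha . x is the parity of card (alpha \<inter> x).\<close>

definition vadd :: "'n set \<Rightarrow> 'n set \<Rightarrow> 'n set" where
  "vadd a b = (a - b) \<union> (b - a)"

definition chr :: "'n::finite set \<Rightarrow> 'n set \<Rightarrow> real" where
  "chr \<alpha> x = (-1) ^ card (\<alpha> \<inter> x)"

definition fourier :: "('n::finite set \<Rightarrow> real) \<Rightarrow> 'n set \<Rightarrow> real" where
  "fourier f \<alpha> = (1 / 2 ^ CARD('n)) * (\<Sum>x\<in>UNIV. f x * chr \<alpha> x)"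

definition norm2sq :: "('n::finite set \<Rightarrow> real) \<Rightarrow> real" where
  "norm2sq f = (1 / 2 ^ CARD('n)) * (\<Sum>x\<in>UNIV. (f x)^2)"

text \<open>Linear subspaces of F_2^n (over F_2, closure under addition and
  containing 0 is exactly being a subspace) of codimension d.\<close>
definition is_subspace :: "'n set set \<Rightarrow> bool" where
  "is_subspace H \<longleftrightarrow> {} \<in> H \<and> (\<forall>a\<in>H. \<forall>b\<in>H. vadd a b \<in> H)"

definition subspaces_codim :: "nat \<Rightarrow> 'n::finite set set set" where
  "subspaces_codim d = {H. is_subspace H \<and> card H = 2 ^ (CARD('n) - d) \<and> d \<le> CARD('n)}"

definition cosets :: "'n set set \<Rightarrow> 'n set set set" where
  "cosets H = (\<lambda>a. (\<lambda>h. vadd a h) ` H) ` UNIV"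

definition coset_energy :: "('n::finite set \<Rightarrow> real) \<Rightarrow> 'n set set \<Rightarrow> real" where
  "coset_energy f C = (\<Sum>\<beta>\<in>C. (fourier f \<beta>)^2)"

definition desc :: "real multiset \<Rightarrow> real list" where
  "desc M = rev (sorted_list_of_multiset M)"

text \<open>E i (1-based): i-th largest Fourier energy; y H i: i-th largest coset energy.\<close>
definition fourier_energy_sorted :: "('n::finite set \<Rightarrow> real) \<Rightarrow> nat \<Rightarrow> real" where
  "fourier_energy_sorted f i =
     desc (image_mset (\<lambda>\<alpha>. (fourier f \<alpha>)^2) (mset_set UNIV)) ! (i - 1)"

definition coset_energy_sorted :: "('n::finite set \<Rightarrow> real) \<Rightarrow> 'n set set \<Rightarrow> nat \<Rightarrow> real" where
  "coset_energy_sorted f H i =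
     desc (image_mset (coset_energy f) (mset_set (cosets H))) ! (i - 1)"

end

theory Submission
  imports Defs
begin

lemma top_sum_le:
  fixes ys :: "real list"
  assumes srt: "sorted_wrt (\<ge>) ys" and I: "I \<subseteq> {..<length ys}" and cI: "card I = s"
  shows "(\<Sum>i\<in>I. ys!i) \<le> (\<Sum>i<s. ys!i)"
proof (cases "s = 0")
  case True then show ?thesis using cI I by (simp add: finite_subset)
next
  case False
  have fI: "finite I" using I finite_subset by blast
  have sl: "s \<le> length ys" using card_mono[OF _ I] cI by simp
  define v where "v = ys!(s-1)"
  have nth: "\<And>i j. i < j \<Longrightarrow> j < length ys \<Longrightarrow> ys!j \<le> ys!i"
    using srt by (auto simp: sorted_wrt_iff_nth_less)
  have nth': "\<And>i j. i \<le> j \<Longrightarrow> j < length ys \<Longrightarrow> ys!j \<le> ys!i"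
    using nth by (metis order.order_iff_strict order_refl)
  have c1: "card I = card (I \<inter> {..<s}) + card (I - {..<s})"
    using fI by (metis card_Int_Diff finite_Int)
  have c2: "s = card ({..<s} \<inter> I) + card ({..<s} - I)"
    by (metis card_Int_Diff card_lessThan finite_lessThan)
  have ceq: "card (I - {..<s}) = card ({..<s} - I)"
    using c1 c2 cI by (simp add: Int_commute)
  have "(\<Sum>i\<in>I - {..<s}. ys!i) \<le> (\<Sum>i\<in>I - {..<s}. v)"
    apply (rule sum_mono) unfolding v_def using I False by (intro nth') auto
  also have "\<dots> = (\<Sum>i\<in>{..<s} - I. v)" using ceq by simp
  also have "\<dots> \<le> (\<Sum>i\<in>{..<s} - I. ys!i)"
    apply (rule sum_mono) unfolding v_def using sl False by (intro nth') auto
  finally have le: "(\<Sum>i\<in>I - {..<s}. ys!i) \<le> (\<Sum>i\<in>{..<s} - I. ys!i)" .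
  have "(\<Sum>i\<in>I. ys!i) = (\<Sum>i\<in>I \<inter> {..<s}. ys!i) + (\<Sum>i\<in>I - {..<s}. ys!i)"
    using fI by (rule sum.Int_Diff)
  moreover have "(\<Sum>i<s. ys!i) = (\<Sum>i\<in>{..<s} \<inter> I. ys!i) + (\<Sum>i\<in>{..<s} - I. ys!i)"
    by (rule sum.Int_Diff) simp
  ultimately show ?thesis using le by (simp add: Int_commute)
qed

lemma desc_enum:
  fixes g :: "'a \<Rightarrow> real"
  assumes "finite A"
  shows "\<exists>zs. distinct zs \<and> set zs = A \<and> desc (image_mset g (mset_set A)) = map g zs
           \<and> sorted_wrt (\<ge>) (map g zs)"
proof -
  obtain xs where xs: "distinct xs" "set xs = A" using finite_distinct_list[OF assms] by blast
  have ms: "mset_set A = mset xs" using mset_set_set[OF xs(1)] xs(2) by simp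
  have "sort (map g xs) = map g (sort_key g xs)"
    by (rule properties_for_sort) (simp_all add: mset_map)
  hence d: "desc (image_mset g (mset_set A)) = map g (rev (sort_key g xs))"
    unfolding desc_def ms by (simp add: rev_map flip: mset_map)
  show ?thesis
    apply (rule exI[of _ "rev (sort_key g xs)"])
    using xs d sorted_sort_key[of g xs] by (simp add: sorted_wrt_rev rev_map[symmetric] sorted_wrt_map)
qed

lemma top_s:
  fixes g :: "'a \<Rightarrow> real"
  assumes fA: "finite A" and sA: "s \<le> card A"
  shows "\<exists>B. B \<subseteq> A \<and> card B = s \<and>
     (\<Sum>i=1..s. desc (image_mset g (mset_set A)) ! (i - 1)) = sum g B \<and>
     (\<forall>B'. B' \<subseteq> A \<longrightarrow> card B' = s \<longrightarrow> sum g B' \<le> sum g B)"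
proof -
  obtain zs where zs: "distinct zs" "set zs = A" "desc (image_mset g (mset_set A)) = map g zs"
     "sorted_wrt (\<ge>) (map g zs)" using desc_enum[OF fA] by blast
  have len: "length zs = card A" using zs distinct_card by metis
  have sh: "(\<Sum>i=1..s. desc (image_mset g (mset_set A)) ! (i - 1)) = (\<Sum>i<s. g (zs!i))"
  proof -
    have "(\<Sum>i=1..s. desc (image_mset g (mset_set A)) ! (i - 1)) = (\<Sum>i<s. desc (image_mset g (mset_set A)) ! i)"
      by (induction s) (auto simp: atLeastAtMostSuc_conv lessThan_Suc)
    also have "\<dots> = (\<Sum>i<s. g (zs!i))" using zs(3) len sA by (intro sum.cong) auto
    finally show ?thesis .
  qed
  define B where "B = (\<lambda>i. zs!i) ` {..<s}"
  have inj: "inj_on (\<lambda>i. zs!i) {..<length zs}" using zs(1) by (simp add: inj_on_def nth_eq_iff_index_eq)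
  have inj2: "inj_on (\<lambda>i. zs!i) {..<s}" using inj sA len by (auto intro: inj_on_subset)
  have B1: "B \<subseteq> A" unfolding B_def using zs(2) sA len by auto
  have B2: "card B = s" unfolding B_def using card_image[OF inj2] by simp
  have B3: "sum g B = (\<Sum>i<s. g (zs!i))" unfolding B_def by (simp add: sum.reindex[OF inj2])
  have B4: "sum g B' \<le> sum g B" if "B' \<subseteq> A" "card B' = s" for B'
  proof -
    define I where "I = {i. i < length zs \<and> zs!i \<in> B'}"
    have IB: "(\<lambda>i. zs!i) ` I = B'" 
    proof
      show "(\<lambda>i. zs!i) ` I \<subseteq> B'" unfolding I_def by auto
      show "B' \<subseteq> (\<lambda>i. zs!i) ` I"
      proof
        fix x assume "x \<in> B'"
        then have "x \<in> set zs" using that(1) zs(2) by auto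
        then obtain i where "i < length zs" "zs!i = x" by (auto simp: in_set_conv_nth)
        then show "x \<in> (\<lambda>i. zs!i) ` I" unfolding I_def using \<open>x \<in> B'\<close> by auto
      qed
    qed
    have injI: "inj_on (\<lambda>i. zs!i) I" using inj unfolding I_def by (auto intro: inj_on_subset)
    have "card I = s" using card_image[OF injI] IB that by simp
    moreover have "I \<subseteq> {..<length (map g zs)}" unfolding I_def by auto
    ultimately have "(\<Sum>i\<in>I. map g zs!i) \<le> (\<Sum>i<s. map g zs!i)" using top_sum_le zs(4) by blast
    moreover have "(\<Sum>i\<in>I. map g zs!i) = sum g B'"
      using IB sum.reindex[OF injI, of g] unfolding I_def by (simp add: comp_def)
    moreover have "(\<Sum>i<s. map g zs!i) = sum g B" using B3 sA len by simp
    ultimately show ?thesis by simp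
  qed
  show ?thesis using B1 B2 B3 B4 sh by metis
qed

lemma vadd_comm: "vadd a b = vadd b a" by (auto simp: vadd_def)
lemma vadd_assoc: "vadd (vadd a b) c = vadd a (vadd b c)" by (auto simp: vadd_def)
lemma vadd_self[simp]: "vadd a a = {}" by (auto simp: vadd_def)
lemma vadd_empty[simp]: "vadd a {} = a" "vadd {} a = a" by (auto simp: vadd_def)
lemma vadd_cancel[simp]: "vadd a (vadd a b) = b" by (auto simp: vadd_def)
lemma vadd_eq_empty: "vadd a b = {} \<longleftrightarrow> a = b" by (auto simp: vadd_def)

lemma card_inter_vadd:
  fixes A x y :: "'n::finite set"
  shows "card (A \<inter> x) + card (A \<inter> y) = card (A \<inter> vadd x y) + 2 * card (A \<inter> x \<inter> y)"
proof -
  have 1: "card (A \<inter> x) = card (A \<inter> x - y) + card (A \<inter> x \<inter> y)"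
    using card_Int_Diff[of "A \<inter> x" y] by (simp add: Int_assoc)
  have 2: "card (A \<inter> y) = card (A \<inter> y - x) + card (A \<inter> x \<inter> y)"
    using card_Int_Diff[of "A \<inter> y" x] by (simp add: Int_ac)
  have 3: "A \<inter> vadd x y = (A \<inter> x - y) \<union> (A \<inter> y - x)" by (auto simp: vadd_def)
  have 4: "card (A \<inter> vadd x y) = card (A \<inter> x - y) + card (A \<inter> y - x)"
    unfolding 3 by (rule card_Un_disjoint) auto
  show ?thesis using 1 2 4 by simp
qed

lemma parity_vadd:
  fixes A x y :: "'n::finite set"
  shows "odd (card (A \<inter> vadd x y)) \<longleftrightarrow> (odd (card (A \<inter> x)) \<noteq> odd (card (A \<inter> y)))"
proof -
  have g: "a + b = c + 2*k \<Longrightarrow> odd c \<longleftrightarrow> (odd a \<noteq> odd b)" for a b c k :: nat by presburger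
  show ?thesis by (rule g[OF card_inter_vadd[of A x y]])
qed

lemma chr_mult: "chr \<alpha> x * chr \<alpha> y = chr \<alpha> (vadd x y)"
  unfolding chr_def
proof -
  have "(-1::real) ^ card (\<alpha> \<inter> x) * (-1) ^ card (\<alpha> \<inter> y) = (-1) ^ (card (\<alpha> \<inter> vadd x y) + 2 * card (\<alpha> \<inter> x \<inter> y))"
    by (simp add: power_add card_inter_vadd[symmetric])
  also have "\<dots> = (-1) ^ card (\<alpha> \<inter> vadd x y)" by (simp add: power_add power_mult)
  finally show "(-1::real) ^ card (\<alpha> \<inter> x) * (-1) ^ card (\<alpha> \<inter> y) = (-1) ^ card (\<alpha> \<inter> vadd x y)" .
qed

lemma card_set_UNIV: "card (UNIV :: 'n::finite set set) = 2 ^ CARD('n)"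
  by (simp add: card_UNIV_set)

lemma chr_sum_nz:
  fixes z :: "'n::finite set"
  assumes "z \<noteq> {}"
  shows "(\<Sum>\<alpha>\<in>UNIV. chr \<alpha> z) = 0"
proof -
  obtain i where i: "i \<in> z" using assms by blast
  define P where "P = {\<alpha>::'n set. i \<notin> \<alpha>}"
  have U: "UNIV = P \<union> insert i ` P"
  proof (rule set_eqI)
    fix x :: "'n set"
    show "x \<in> UNIV \<longleftrightarrow> x \<in> P \<union> insert i ` P"
    proof (cases "i \<in> x")
      case True
      then have "x = insert i (x - {i})" by blast
      moreover have "x - {i} \<in> P" unfolding P_def by blast
      ultimately show ?thesis by blast
    next
      case False then show ?thesis unfolding P_def by blast
    qed
  qed
  have disj: "P \<inter> insert i ` P = {}" unfolding P_def by blast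
  have inj: "inj_on (insert i) P" unfolding P_def inj_on_def by (simp add: insert_ident)
  have c: "chr (insert i \<alpha>) z = - chr \<alpha> z" if "\<alpha> \<in> P" for \<alpha>
  proof -
    have "insert i \<alpha> \<inter> z = insert i (\<alpha> \<inter> z)" using i by blast
    moreover have "i \<notin> \<alpha> \<inter> z" using that unfolding P_def by blast
    ultimately have "card (insert i \<alpha> \<inter> z) = Suc (card (\<alpha> \<inter> z))" by simp
    thus ?thesis unfolding chr_def by simp
  qed
  have "(\<Sum>\<alpha>\<in>UNIV. chr \<alpha> z) = (\<Sum>\<alpha>\<in>P \<union> insert i ` P. chr \<alpha> z)" using U by simp
  also have "\<dots> = (\<Sum>\<alpha>\<in>P. chr \<alpha> z) + (\<Sum>\<alpha>\<in>insert i ` P. chr \<alpha> z)"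
    by (rule sum.union_disjoint[OF finite finite disj])
  also have "(\<Sum>\<alpha>\<in>insert i ` P. chr \<alpha> z) = (\<Sum>\<alpha>\<in>P. chr (insert i \<alpha>) z)"
    by (rule sum.reindex[OF inj, unfolded comp_def])
  also have "\<dots> = (\<Sum>\<alpha>\<in>P. - chr \<alpha> z)" using c by (rule sum.cong[OF refl])
  finally show ?thesis by (simp add: sum_negf)
qed

lemma chr_sum: "(\<Sum>\<alpha>\<in>UNIV. chr \<alpha> (z::'n::finite set)) = (if z = {} then 2 ^ CARD('n) else 0)"
  using chr_sum_nz[of z] by (auto simp: chr_def card_set_UNIV)

lemma parseval:
  fixes f :: "'n::finite set \<Rightarrow> real"
  shows "(\<Sum>\<alpha>\<in>UNIV. (fourier f \<alpha>)^2) = norm2sq f"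
proof -
  define N :: real where "N = 2 ^ CARD('n)"
  have N0: "N > 0" unfolding N_def by simp
  have "(\<Sum>\<alpha>\<in>UNIV. (fourier f \<alpha>)^2) = (1/N)^2 * (\<Sum>\<alpha>\<in>UNIV. (\<Sum>x\<in>UNIV. f x * chr \<alpha> x)^2)"
  proof -
    have fa: "(fourier f \<alpha>)^2 = (1/N)^2 * (\<Sum>x\<in>UNIV. f x * chr \<alpha> x)^2" for \<alpha>
      unfolding fourier_def N_def by (simp only: power_mult_distrib)
    show ?thesis unfolding fa by (rule sum_distrib_left[symmetric])
  qed
  also have "(\<Sum>\<alpha>\<in>UNIV. (\<Sum>x\<in>UNIV. f x * chr \<alpha> x)^2)
     = (\<Sum>\<alpha>\<in>UNIV. \<Sum>x\<in>UNIV. \<Sum>y\<in>UNIV. f x * f y * chr \<alpha> (vadd x y))"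
    by (simp add: power2_eq_square sum_product chr_mult[symmetric] mult_ac)
  also have "\<dots> = (\<Sum>x\<in>UNIV. \<Sum>\<alpha>\<in>UNIV. \<Sum>y\<in>UNIV. f x * f y * chr \<alpha> (vadd x y))"
    by (rule sum.swap)
  also have "\<dots> = (\<Sum>x\<in>UNIV. \<Sum>y\<in>UNIV. \<Sum>\<alpha>\<in>UNIV. f x * f y * chr \<alpha> (vadd x y))"
    by (rule sum.cong[OF refl], rule sum.swap)
  also have "\<dots> = (\<Sum>x\<in>UNIV. \<Sum>y\<in>UNIV. f x * f y * (\<Sum>\<alpha>\<in>UNIV. chr \<alpha> (vadd x y)))"
    by (simp add: sum_distrib_left)
  also have "\<dots> = (\<Sum>x\<in>UNIV. \<Sum>y\<in>UNIV. if y = x then N * (f x)^2 else 0)"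
    by (intro sum.cong refl) (auto simp: chr_sum vadd_eq_empty N_def power2_eq_square)
  also have "\<dots> = N * (\<Sum>x\<in>UNIV. (f x)^2)" by (simp add: sum_distrib_left)
  finally show ?thesis unfolding norm2sq_def N_def[symmetric] using N0 by (simp add: power2_eq_square)
qed

lemma sub_empty: "is_subspace H \<Longrightarrow> {} \<in> H" by (simp add: is_subspace_def)
lemma sub_add: "is_subspace H \<Longrightarrow> a \<in> H \<Longrightarrow> b \<in> H \<Longrightarrow> vadd a b \<in> H"
  by (simp add: is_subspace_def)

lemma mem_coset: "x \<in> vadd a ` H \<longleftrightarrow> vadd a x \<in> H"
proof
  assume "x \<in> vadd a ` H" then obtain h where "h \<in> H" "x = vadd a h" by blast
  thus "vadd a x \<in> H" by simp
next
  assume "vadd a x \<in> H" thus "x \<in> vadd a ` H" by (intro image_eqI[of _ _ "vadd a x"]) simp_all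
qed

lemma coset_eq:
  assumes H: "is_subspace H" and x: "vadd a x \<in> H"
  shows "vadd a ` H = vadd x ` H"
proof (rule set_eqI)
  fix y
  have e: "vadd x y = vadd (vadd a x) (vadd a y)" by (auto simp: vadd_def)
  have e2: "vadd a y = vadd (vadd a x) (vadd x y)" by (auto simp: vadd_def)
  show "y \<in> vadd a ` H \<longleftrightarrow> y \<in> vadd x ` H"
    unfolding mem_coset
  proof
    assume "vadd a y \<in> H" thus "vadd x y \<in> H" unfolding e by (rule sub_add[OF H x])
  next
    assume "vadd x y \<in> H" thus "vadd a y \<in> H" unfolding e2 by (rule sub_add[OF H x])
  qed
qed

lemma self_in_coset: "is_subspace H \<Longrightarrow> x \<in> vadd x ` H"
  by (simp add: mem_coset sub_empty)

lemma coset_of_mem: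
  assumes H: "is_subspace H" and C: "C \<in> cosets H" and x: "x \<in> C"
  shows "C = vadd x ` H"
proof -
  obtain a where a: "C = vadd a ` H" using C unfolding cosets_def by blast
  have "vadd a x \<in> H" using a x mem_coset by blast
  from coset_eq[OF H this] a show ?thesis by simp
qed

lemma cosets_disjoint:
  assumes H: "is_subspace H" and "C1 \<in> cosets H" "C2 \<in> cosets H" "C1 \<noteq> C2"
  shows "C1 \<inter> C2 = {}"
proof (rule ccontr)
  assume "C1 \<inter> C2 \<noteq> {}"
  then obtain x where "x \<in> C1" "x \<in> C2" by blast
  then have "C1 = vadd x ` H" "C2 = vadd x ` H" using coset_of_mem[OF H] assms(2,3) by blast+
  thus False using assms(4) by simp
qed

lemma cosets_Union: "is_subspace H \<Longrightarrow> \<Union>(cosets H) = UNIV"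
proof -
  assume H: "is_subspace H"
  have "x \<in> \<Union>(cosets H)" for x
    unfolding cosets_def using self_in_coset[OF H, of x] by (intro UnionI[of "vadd x ` H"]) simp_all
  thus ?thesis by blast
qed

lemma card_coset: "card (vadd a ` H) = card H"
  by (rule card_image, rule inj_onI, metis vadd_cancel)

lemma card_cosets:
  fixes H :: "'n::finite set set"
  assumes H: "is_subspace H"
  shows "card H * card (cosets H) = 2 ^ CARD('n)"
proof -
  have "card H * card (cosets H) = card (\<Union>(cosets H))"
  proof (rule card_partition)
    show "finite (cosets H)" by (simp add: cosets_def)
    show "finite (\<Union>(cosets H))" by (rule finite_subset[OF subset_UNIV]) simp
    show "card c = card H" if "c \<in> cosets H" for c using that card_coset unfolding cosets_def by blast
    show "c1 \<inter> c2 = {}" if "c1 \<in> cosets H" "c2 \<in> cosets H" "c1 \<noteq> c2" for c1 c2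
      using cosets_disjoint[OF H] that by blast
  qed
  thus ?thesis using cosets_Union[OF H] card_set_UNIV by simp
qed

lemma card_cosets_codim:
  assumes "(H::'n::finite set set) \<in> subspaces_codim d"
  shows "card (cosets H) = 2 ^ d"
proof -
  have H: "is_subspace H" "card H = 2^(CARD('n) - d)" "d \<le> CARD('n)"
    using assms unfolding subspaces_codim_def by auto
  have "2^(CARD('n) - d) * card (cosets H) = 2^(CARD('n) - d) * 2^d"
    using card_cosets[OF H(1)] H(2,3) by (simp add: power_add[symmetric])
  thus ?thesis by simp
qed

lemma sum_cosets:
  fixes H :: "'n::finite set set"
  assumes H: "is_subspace H"
  shows "(\<Sum>C\<in>cosets H. \<Sum>\<alpha>\<in>C. G \<alpha> C) = (\<Sum>\<alpha>\<in>UNIV. G \<alpha> (vadd \<alpha> ` H))"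
proof -
  have "(\<Sum>\<alpha>\<in>UNIV. G \<alpha> (vadd \<alpha> ` H)) = (\<Sum>\<alpha>\<in>\<Union>(cosets H). G \<alpha> (vadd \<alpha> ` H))"
    using cosets_Union[OF H] by simp
  also have "\<dots> = (\<Sum>C\<in>cosets H. \<Sum>\<alpha>\<in>C. G \<alpha> (vadd \<alpha> ` H))"
  proof (rule sum.Union_disjoint[unfolded comp_def])
    show "\<forall>A\<in>cosets H. finite A" by (simp add: cosets_def)
    show "\<forall>A\<in>cosets H. \<forall>B\<in>cosets H. A \<noteq> B \<longrightarrow> A \<inter> B = {}"
      using cosets_disjoint[OF H] by blast
  qed
  also have "\<dots> = (\<Sum>C\<in>cosets H. \<Sum>\<alpha>\<in>C. G \<alpha> C)"
  proof (intro sum.cong refl)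
    fix C \<alpha> assume "C \<in> cosets H" "\<alpha> \<in> C"
    then have "C = vadd \<alpha> ` H" by (rule coset_of_mem[OF H])
    thus "G \<alpha> (vadd \<alpha> ` H) = G \<alpha> C" by simp
  qed
  finally show ?thesis ..
qed

lemma transvection_exists:
  fixes g g' :: "'n::finite set"
  assumes g: "g \<noteq> {}" and g': "g' \<noteq> {}"
  shows "\<exists>T. (\<forall>x. T (T x) = x) \<and> (\<forall>x y. T (vadd x y) = vadd (T x) (T y)) \<and> T g = g'"
proof -
  have "\<exists>S. odd (card (g \<inter> S)) \<and> odd (card (g' \<inter> S))"
  proof (cases "g \<inter> g' = {}")
    case False
    then obtain k where k: "k \<in> g" "k \<in> g'" by blast
    hence "g \<inter> {k} = {k}" "g' \<inter> {k} = {k}" by auto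
    thus ?thesis by (intro exI[of _ "{k}"]) simp
  next
    case True
    obtain i j where ij: "i \<in> g" "j \<in> g'" using g g' by blast
    hence "g \<inter> {i, j} = {i}" "g' \<inter> {i, j} = {j}" using True by auto
    thus ?thesis by (intro exI[of _ "{i,j}"]) simp
  qed
  then obtain S where S: "odd (card (g \<inter> S))" "odd (card (g' \<inter> S))" by blast
  define v where "v = vadd g g'"
  have ev: "even (card (S \<inter> v))"
    using parity_vadd[of S g g'] S unfolding v_def by (simp add: Int_commute)
  define T where "T x = (if odd (card (S \<inter> x)) then vadd x v else x)" for x
  have TT: "T (T x) = x" for x
  proof (cases "odd (card (S \<inter> x))")
    case True
    hence "odd (card (S \<inter> vadd x v))" using parity_vadd[of S x v] ev by simp
    thus ?thesis using True unfolding T_def by (simp add: vadd_assoc)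
  next
    case False thus ?thesis unfolding T_def by simp
  qed
  have Tadd: "T (vadd x y) = vadd (T x) (T y)" for x y
  proof -
    have p: "odd (card (S \<inter> vadd x y)) \<longleftrightarrow> (odd (card (S \<inter> x)) \<noteq> odd (card (S \<inter> y)))"
      by (rule parity_vadd)
    have e1: "vadd (vadd x v) (vadd y v) = vadd x y" by (auto simp: vadd_def)
    have e2: "vadd (vadd x v) y = vadd (vadd x y) v" by (auto simp: vadd_def)
    have e3: "vadd x (vadd y v) = vadd (vadd x y) v" by (auto simp: vadd_def)
    show ?thesis unfolding T_def using p e1 e2 e3 by auto
  qed
  have Tg: "T g = g'"
    using S(1) unfolding T_def v_def by (simp add: Int_commute)
  show ?thesis using TT Tadd Tg by blast
qed

lemma lin_empty: "(\<forall>x y. T (vadd x y) = vadd (T x) (T y)) \<Longrightarrow> T {} = {}"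
  by (metis vadd_self)

lemma count_sym:
  fixes g g' :: "'n::finite set"
  assumes g: "g \<noteq> {}" and g': "g' \<noteq> {}"
  shows "card {H \<in> subspaces_codim d. g \<in> H} = card {H \<in> subspaces_codim d. g' \<in> H}"
proof -
  obtain T where TT: "\<And>x. T (T x) = x" and Tadd: "\<And>x y. T (vadd x y) = vadd (T x) (T y)"
    and Tg: "T g = g'" using transvection_exists[OF g g'] by blast
  have T0: "T {} = {}" using lin_empty Tadd by blast
  have Tg': "T g' = g" using TT Tg by metis
  have injT: "inj T" by (metis TT injI)
  have pres: "T ` H \<in> subspaces_codim d" if "H \<in> subspaces_codim d" for H :: "'n set set"
  proof -
    have "is_subspace (T ` H)"
      using that T0 unfolding subspaces_codim_def is_subspace_def
      by (auto simp: Tadd[symmetric] intro!: image_eqI[of "{}" T] )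
    moreover have "card (T ` H) = card H" using card_image[OF inj_on_subset[OF injT]] by blast
    ultimately show ?thesis using that unfolding subspaces_codim_def by simp
  qed
  have II: "T ` (T ` H) = H" for H by (simp add: image_image TT)
  have "bij_betw ((`) T) {H \<in> subspaces_codim d. g \<in> H} {H \<in> subspaces_codim d. g' \<in> H}"
  proof (rule bij_betw_byWitness[where f'="(`) T"])
    show "\<forall>a\<in>{H \<in> subspaces_codim d. g \<in> H}. T ` T ` a = a" using II by blast
    show "\<forall>a\<in>{H \<in> subspaces_codim d. g' \<in> H}. T ` T ` a = a" using II by blast
    show "(`) T ` {H \<in> subspaces_codim d. g \<in> H} \<subseteq> {H \<in> subspaces_codim d. g' \<in> H}"
      using pres Tg by blast
    show "(`) T ` {H \<in> subspaces_codim d. g' \<in> H} \<subseteq> {H \<in> subspaces_codim d. g \<in> H}"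
      using pres Tg' by blast
  qed
  thus ?thesis by (rule bij_betw_same_card)
qed

lemma card_filter_sum: "finite A \<Longrightarrow> card {x\<in>A. P x} = (\<Sum>x\<in>A. if P x then 1 else 0 :: nat)"
  by (simp add: sum.inter_filter[symmetric])

lemma count_bound:
  fixes g :: "'n::finite set"
  assumes g: "g \<noteq> {}" and d: "d \<le> CARD('n)"
  shows "real (card {H \<in> subspaces_codim d. g \<in> H}) * 2^d \<le> real (card (subspaces_codim d :: 'n set set set))"
proof -
  define X where "X = (subspaces_codim d :: 'n set set set)"
  define N where "N = card {H \<in> X. g \<in> H}"
  define U where "U = (UNIV :: 'n set set) - {{}}"
  define M :: nat where "M = 2 ^ (CARD('n) - d)"
  have cU: "card U = 2 ^ CARD('n) - 1" unfolding U_def by (simp add: card_set_UNIV card_Diff_subset)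
  have "(\<Sum>\<gamma>\<in>U. card {H \<in> X. \<gamma> \<in> H}) = (\<Sum>\<gamma>\<in>U. N)"
    unfolding N_def X_def U_def using count_sym[OF _ g] by (intro sum.cong refl) blast
  hence s1: "(\<Sum>\<gamma>\<in>U. card {H \<in> X. \<gamma> \<in> H}) = (2 ^ CARD('n) - 1) * N" using cU by simp
  have "(\<Sum>\<gamma>\<in>U. card {H \<in> X. \<gamma> \<in> H}) = (\<Sum>\<gamma>\<in>U. \<Sum>H\<in>X. if \<gamma> \<in> H then 1 else 0)"
    by (simp add: card_filter_sum)
  also have "\<dots> = (\<Sum>H\<in>X. \<Sum>\<gamma>\<in>U. if \<gamma> \<in> H then 1 else 0)" by (rule sum.swap)
  also have "\<dots> = (\<Sum>H\<in>X. M - 1)"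
  proof (rule sum.cong[OF refl])
    fix H assume H: "H \<in> X"
    have "(\<Sum>\<gamma>\<in>U. if \<gamma> \<in> H then 1 else 0) = card {\<gamma>\<in>U. \<gamma> \<in> H}" by (simp add: card_filter_sum)
    also have "{\<gamma>\<in>U. \<gamma> \<in> H} = H - {{}}" unfolding U_def by blast
    also have "card (H - {{}}) = M - 1"
    proof -
      have "is_subspace H" "card H = M" using H unfolding X_def subspaces_codim_def M_def by auto
      moreover have "{} \<in> H" using sub_empty[OF \<open>is_subspace H\<close>] .
      ultimately show ?thesis using card_Diff_singleton[of "{}" H] by simp
    qed
    finally show "(\<Sum>\<gamma>\<in>U. if \<gamma> \<in> H then 1 else 0) = M - 1" .
  qed
  also have "\<dots> = card X * (M - 1)" by simp
  finally have eq: "(2 ^ CARD('n) - 1) * N = card X * (M - 1)" using s1 by simp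
  have M1: "M \<ge> 1" unfolding M_def by simp
  have pw: "(2::nat) ^ CARD('n) = M * 2^d" unfolding M_def using d by (simp add: power_add[symmetric])
  have n1: "CARD('n) \<ge> 1" by (simp add: Suc_le_eq)
  have P1: "(2::nat) ^ CARD('n) \<ge> 2" using n1 by (metis power_increasing power_one_right zero_less_numeral one_le_numeral)
  define R where "R = real M * 2^d - 1"
  have RM: "real M * 2^d = real ((2::nat) ^ CARD('n))" using pw by simp
  have R0: "R > 0" unfolding R_def using RM P1 by (metis of_nat_le_iff of_nat_numeral diff_gt_0_iff_gt less_le_trans one_less_numeral_iff semiring_norm(76))
  have eqr: "R * real N = real (card X) * (real M - 1)"
  proof -
    have "real ((2 ^ CARD('n) - 1) * N) = real (card X * (M - 1))" using eq by simp
    thus ?thesis unfolding R_def using P1 M1 pw by (simp add: of_nat_diff)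
  qed
  have "R * (real N * 2^d) = real (card X) * ((real M - 1) * 2^d)" 
    by (metis eqr mult.assoc)
  also have "\<dots> \<le> real (card X) * R"
    unfolding R_def by (intro mult_left_mono) (simp_all add: algebra_simps)
  finally have "R * (real N * 2^d) \<le> R * real (card X)" by (simp add: mult.commute)
  thus ?thesis using R0 unfolding N_def X_def by simp
qed

lemma codim_nonempty:
  assumes d: "d \<le> CARD('n::finite)"
  shows "subspaces_codim d \<noteq> ({} :: 'n set set set)"
proof -
  obtain S0 :: "'n set" where S0: "card S0 = CARD('n) - d"
    using obtain_subset_with_card_n[of "CARD('n) - d" "UNIV :: 'n set"] by auto
  have "is_subspace (Pow S0)" unfolding is_subspace_def vadd_def by auto
  moreover have "card (Pow S0) = 2 ^ (CARD('n) - d)" using S0 by (simp add: card_Pow)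
  ultimately have "Pow S0 \<in> subspaces_codim d" using d unfolding subspaces_codim_def by simp
  thus ?thesis by blast
qed

definition Qf :: "('n::finite set \<Rightarrow> real) \<Rightarrow> 'n set set \<Rightarrow> real" where
  "Qf a H = (\<Sum>\<alpha>\<in>UNIV. \<Sum>\<beta>\<in>UNIV. if \<beta> \<noteq> \<alpha> \<and> vadd \<alpha> \<beta> \<in> H then a \<alpha> * a \<beta> else 0)"

definition Pf :: "('n::finite set \<Rightarrow> real) \<Rightarrow> 'n set set \<Rightarrow> real" where
  "Pf a C = (\<Sum>\<alpha>\<in>C. \<Sum>\<beta>\<in>C - {\<alpha>}. a \<alpha> * a \<beta>)"

lemma Pf_nonneg: "(\<And>x. a x \<ge> 0) \<Longrightarrow> Pf a C \<ge> 0"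
  unfolding Pf_def by (intro sum_nonneg mult_nonneg_nonneg) auto

lemma Qf_nonneg: "(\<And>x. a x \<ge> 0) \<Longrightarrow> Qf a H \<ge> 0"
  unfolding Qf_def by (intro sum_nonneg) auto

lemma sum_Qf:
  fixes a :: "'n::finite set \<Rightarrow> real"
  assumes a: "\<And>x. a x \<ge> 0" and d: "d \<le> CARD('n)"
  shows "(\<Sum>H\<in>subspaces_codim d. Qf a H) \<le> real (card (subspaces_codim d :: 'n set set set)) / 2^d * (\<Sum>\<alpha>\<in>UNIV. a \<alpha>)^2"
proof -
  define X where "X = (subspaces_codim d :: 'n set set set)"
  define K where "K = real (card X) / 2^d"
  have K0: "K \<ge> 0" unfolding K_def by simp
  have "(\<Sum>H\<in>X. Qf a H) = (\<Sum>\<alpha>\<in>UNIV. \<Sum>H\<in>X. \<Sum>\<beta>\<in>UNIV. if \<beta> \<noteq> \<alpha> \<and> vadd \<alpha> \<beta> \<in> H then a \<alpha> * a \<beta> else 0)"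
    unfolding Qf_def by (rule sum.swap)
  also have "\<dots> = (\<Sum>\<alpha>\<in>UNIV. \<Sum>\<beta>\<in>UNIV. \<Sum>H\<in>X. if \<beta> \<noteq> \<alpha> \<and> vadd \<alpha> \<beta> \<in> H then a \<alpha> * a \<beta> else 0)"
    by (rule sum.cong[OF refl], rule sum.swap)
  also have "\<dots> \<le> (\<Sum>\<alpha>\<in>UNIV. \<Sum>\<beta>\<in>UNIV. a \<alpha> * a \<beta> * K)"
  proof (intro sum_mono)
    fix \<alpha> \<beta> :: "'n set"
    show "(\<Sum>H\<in>X. if \<beta> \<noteq> \<alpha> \<and> vadd \<alpha> \<beta> \<in> H then a \<alpha> * a \<beta> else 0) \<le> a \<alpha> * a \<beta> * K"
    proof (cases "\<beta> = \<alpha>")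
      case True thus ?thesis using K0 a by simp
    next
      case False
      have ne: "vadd \<alpha> \<beta> \<noteq> {}" using False vadd_eq_empty by metis
      have "(\<Sum>H\<in>X. if \<beta> \<noteq> \<alpha> \<and> vadd \<alpha> \<beta> \<in> H then a \<alpha> * a \<beta> else 0)
          = (\<Sum>H\<in>{H\<in>X. vadd \<alpha> \<beta> \<in> H}. a \<alpha> * a \<beta>)"
        using False sum.inter_filter[of X "\<lambda>H. a \<alpha> * a \<beta>" "\<lambda>H. vadd \<alpha> \<beta> \<in> H"] by simp
      also have "\<dots> = a \<alpha> * a \<beta> * real (card {H\<in>X. vadd \<alpha> \<beta> \<in> H})" by simp
      also have "\<dots> \<le> a \<alpha> * a \<beta> * K"
      proof (rule mult_left_mono)
        show "real (card {H\<in>X. vadd \<alpha> \<beta> \<in> H}) \<le> K"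
          using count_bound[OF ne d] unfolding K_def X_def by (simp add: field_simps)
      qed (use a in simp)
      finally show ?thesis .
    qed
  qed
  also have "\<dots> = K * (\<Sum>\<alpha>\<in>UNIV. a \<alpha>)^2"
    by (simp add: power2_eq_square sum_product sum_distrib_left mult_ac)
  finally show ?thesis unfolding K_def X_def .
qed

lemma sum_Pf:
  fixes a :: "'n::finite set \<Rightarrow> real"
  assumes H: "is_subspace H"
  shows "(\<Sum>C\<in>cosets H. Pf a C) = Qf a H"
proof -
  have "(\<Sum>C\<in>cosets H. Pf a C) = (\<Sum>\<alpha>\<in>UNIV. \<Sum>\<beta>\<in>vadd \<alpha> ` H - {\<alpha>}. a \<alpha> * a \<beta>)"
    unfolding Pf_def by (rule sum_cosets[OF H])
  also have "\<dots> = Qf a H"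
  proof -
    have eq: "(\<Sum>\<beta>\<in>vadd \<alpha> ` H - {\<alpha>}. a \<alpha> * a \<beta>) = (\<Sum>\<beta>\<in>UNIV. if \<beta> \<noteq> \<alpha> \<and> vadd \<alpha> \<beta> \<in> H then a \<alpha> * a \<beta> else 0)" for \<alpha>
    proof -
      have "vadd \<alpha> ` H - {\<alpha>} = {\<beta>\<in>UNIV. \<beta> \<noteq> \<alpha> \<and> vadd \<alpha> \<beta> \<in> H}" using mem_coset by blast
      thus ?thesis
        using sum.inter_filter[of UNIV "\<lambda>\<beta>. a \<alpha> * a \<beta>" "\<lambda>\<beta>. \<beta> \<noteq> \<alpha> \<and> vadd \<alpha> \<beta> \<in> H"] by simp
    qed
    show ?thesis unfolding Qf_def eq ..
  qed
  finally show ?thesis .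
qed

lemma r_bound:
  fixes a :: "'x \<Rightarrow> real"
  assumes C: "finite C" and b: "b \<in> C" and mx: "\<And>\<gamma>. \<gamma> \<in> C \<Longrightarrow> a \<gamma> \<le> a b" and a: "\<And>x. a x \<ge> 0"
  shows "(\<Sum>\<beta>\<in>C - {b}. a \<beta>)^2 \<le> (\<Sum>\<alpha>\<in>C. \<Sum>\<beta>\<in>C - {\<alpha>}. a \<alpha> * a \<beta>)"
proof -
  define C' where "C' = C - {b}"
  have fC': "finite C'" using C unfolding C'_def by simp
  have "(\<Sum>\<beta>\<in>C'. a \<beta>)^2 = (\<Sum>\<alpha>\<in>C'. a \<alpha> * (\<Sum>\<beta>\<in>C'. a \<beta>))"
    by (simp add: power2_eq_square sum_distrib_right)
  also have "\<dots> = (\<Sum>\<alpha>\<in>C'. a \<alpha> * (a \<alpha> + (\<Sum>\<beta>\<in>C' - {\<alpha>}. a \<beta>)))"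
    by (intro sum.cong refl) (simp add: sum.remove[OF fC'])
  also have "\<dots> \<le> (\<Sum>\<alpha>\<in>C'. a \<alpha> * (a b + (\<Sum>\<beta>\<in>C' - {\<alpha>}. a \<beta>)))"
    by (intro sum_mono mult_left_mono add_right_mono mx a) (auto simp: C'_def)
  also have "\<dots> = (\<Sum>\<alpha>\<in>C'. a \<alpha> * (\<Sum>\<beta>\<in>C - {\<alpha>}. a \<beta>))"
  proof (intro sum.cong refl)
    fix \<alpha> assume "\<alpha> \<in> C'"
    hence "C - {\<alpha>} = insert b (C' - {\<alpha>})" "b \<notin> C' - {\<alpha>}" using b unfolding C'_def by auto
    thus "a \<alpha> * (a b + (\<Sum>\<beta>\<in>C' - {\<alpha>}. a \<beta>)) = a \<alpha> * (\<Sum>\<beta>\<in>C - {\<alpha>}. a \<beta>)"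
      using fC' by simp
  qed
  also have "\<dots> \<le> (\<Sum>\<alpha>\<in>C. a \<alpha> * (\<Sum>\<beta>\<in>C - {\<alpha>}. a \<beta>))"
    by (rule sum_mono2[OF C]) (auto simp: C'_def intro!: mult_nonneg_nonneg sum_nonneg a)
  also have "\<dots> = (\<Sum>\<alpha>\<in>C. \<Sum>\<beta>\<in>C - {\<alpha>}. a \<alpha> * a \<beta>)" by (simp add: sum_distrib_left)
  finally show ?thesis unfolding C'_def .
qed

lemma max_exists:
  fixes a :: "'x \<Rightarrow> real"
  assumes "finite C" "C \<noteq> {}"
  shows "\<exists>b. b \<in> C \<and> (\<forall>\<gamma>\<in>C. a \<gamma> \<le> a b)"
proof -
  have "Max (a ` C) \<in> a ` C" using assms by simp
  then obtain b where "b \<in> C" "a b = Max (a ` C)" by auto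
  thus ?thesis using assms by auto
qed

lemma final_arith:
  fixes s \<epsilon> W D P L :: real
  assumes s: "s > 0" and e: "\<epsilon> > 0" and W: "W > 0" and D: "D = 2 * s / \<epsilon>^4"
    and l: "L = 3 * \<epsilon>^2 * W / s" and P: "P \<le> 16 * W^2 / D"
  shows "(P + s * L^2) / (2 * L) \<le> 5 * \<epsilon>^2 * W"
proof -
  have l0: "L > 0" using l s e W by simp
  have "16 * W^2 / D = 16 * W^2 * \<epsilon>^4 / (2 * s)" using D by simp
  also have "\<dots> = 8 * W^2 * \<epsilon>^4 / s" by simp
  finally have "16 * W^2 / D = 8 * W^2 * \<epsilon>^4 / s" .
  hence P': "P \<le> 8 * W^2 * \<epsilon>^4 / s" using P by simp
  have "s * L^2 = 9 * \<epsilon>^4 * W^2 / s" unfolding l using s by (simp add: field_simps power2_eq_square eval_nat_numeral)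
  moreover have "9 * \<epsilon>^4 * W^2 / s + 8 * W^2 * \<epsilon>^4 / s = 17 * \<epsilon>^4 * W^2 / s"
    by (simp add: field_simps)
  ultimately have "P + s * L^2 \<le> 17 * \<epsilon>^4 * W^2 / s" using P' by linarith
  also have "\<dots> \<le> 30 * \<epsilon>^4 * W^2 / s"
    using s by (intro divide_right_mono mult_right_mono) auto
  also have "\<dots> = 5 * \<epsilon>^2 * W * (2 * L)"
    unfolding l using s by (simp add: field_simps power2_eq_square eval_nat_numeral)
  finally show ?thesis using l0 by (simp add: divide_le_eq)
qed

lemma deterministic:
  fixes f :: "'n::finite set \<Rightarrow> real" and s d :: nat and \<epsilon> :: real
  assumes s1: "s \<ge> 1" and sd: "s \<le> 2^d" and e: "0 < \<epsilon>"
    and D: "(2::real) ^ d = 2 * real s / \<epsilon> ^ 4"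
    and Hx: "H \<in> subspaces_codim d"
    and Q: "Qf (\<lambda>\<alpha>. (fourier f \<alpha>)^2) H \<le> 16 * (norm2sq f)^2 / 2^d"
  shows "(\<Sum>i=1..s. coset_energy_sorted f H i - fourier_energy_sorted f i) \<le> 5 * \<epsilon>^2 * norm2sq f"
proof -
  define a where "a = (\<lambda>\<alpha>. (fourier f \<alpha>)^2)"
  define W where "W = norm2sq f"
  have a0: "a x \<ge> 0" for x unfolding a_def by simp
  have WA: "W = (\<Sum>\<alpha>\<in>UNIV. a \<alpha>)" unfolding W_def a_def by (simp add: parseval)
  have H: "is_subspace H" and dn: "d \<le> CARD('n)" using Hx unfolding subspaces_codim_def by auto
  have ccos: "card (cosets H) = 2^d" by (rule card_cosets_codim[OF Hx])
  have sU: "s \<le> card (UNIV :: 'n set set)"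
  proof -
    have "(2::nat)^d \<le> 2^CARD('n)" using dn by (simp add: power_increasing)
    with sd have "s \<le> 2^CARD('n)" by (rule le_trans)
    thus ?thesis by (simp add: card_set_UNIV)
  qed
  obtain B where B: "B \<subseteq> cosets H" "card B = s"
    "(\<Sum>i=1..s. desc (image_mset (coset_energy f) (mset_set (cosets H))) ! (i - 1)) = sum (coset_energy f) B"
    using top_s[of "cosets H" s "coset_energy f"] sd ccos by (auto simp: cosets_def)
  obtain B2 where B2: "\<forall>B'. B' \<subseteq> UNIV \<longrightarrow> card B' = s \<longrightarrow> sum a B' \<le>
      (\<Sum>i=1..s. desc (image_mset a (mset_set (UNIV :: 'n set set))) ! (i - 1))"
    using top_s[of "UNIV :: 'n set set" s a] sU by force
  have ysum: "(\<Sum>i=1..s. coset_energy_sorted f H i) = sum (coset_energy f) B"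
    using B(3) unfolding coset_energy_sorted_def by simp
  have Esum: "sum a B' \<le> (\<Sum>i=1..s. fourier_energy_sorted f i)" if "card B' = s" for B'
    using B2 that unfolding fourier_energy_sorted_def a_def by simp
  have cne: "C \<noteq> {}" "finite C" if "C \<in> cosets H" for C
    using that self_in_coset[OF H] unfolding cosets_def by auto
  define bC where "bC C = (SOME b. b \<in> C \<and> (\<forall>\<gamma>\<in>C. a \<gamma> \<le> a b))" for C
  have bC: "bC C \<in> C" "\<And>\<gamma>. \<gamma> \<in> C \<Longrightarrow> a \<gamma> \<le> a (bC C)" if "C \<in> cosets H" for C
    using someI_ex[OF max_exists[OF cne(2)[OF that] cne(1)[OF that], of a]] unfolding bC_def by auto
  define r where "r C = (\<Sum>\<beta>\<in>C - {bC C}. a \<beta>)" for C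
  have split: "coset_energy f C = a (bC C) + r C" if "C \<in> cosets H" for C
    unfolding coset_energy_def r_def a_def[symmetric] using sum.remove[OF cne(2)[OF that] bC(1)[OF that]] .
  have r0: "r C \<ge> 0" for C unfolding r_def by (intro sum_nonneg a0)
  have rP: "(r C)^2 \<le> Pf a C" if "C \<in> cosets H" for C
    unfolding r_def Pf_def by (rule r_bound[where a=a, OF cne(2)[OF that] bC(1)[OF that] bC(2)[OF that] a0])
  have injb: "inj_on bC B"
  proof (rule inj_onI)
    fix C1 C2 assume "C1 \<in> B" "C2 \<in> B" "bC C1 = bC C2"
    show "C1 = C2"
    proof (rule ccontr)
      assume ne: "C1 \<noteq> C2"
      have c: "C1 \<in> cosets H" "C2 \<in> cosets H" using \<open>C1 \<in> B\<close> \<open>C2 \<in> B\<close> B(1) by auto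
      have "bC C1 \<in> C1 \<inter> C2" using bC(1)[OF c(1)] bC(1)[OF c(2)] \<open>bC C1 = bC C2\<close> by simp
      thus False using cosets_disjoint[OF H c ne] by simp
    qed
  qed
  have part1: "(\<Sum>C\<in>B. a (bC C)) \<le> (\<Sum>i=1..s. fourier_energy_sorted f i)"
  proof -
    have "(\<Sum>C\<in>B. a (bC C)) = sum a (bC ` B)" by (simp add: sum.reindex[OF injb])
    also have "\<dots> \<le> (\<Sum>i=1..s. fourier_energy_sorted f i)"
      using Esum card_image[OF injb] B(2) by simp
    finally show ?thesis .
  qed
  have PB: "(\<Sum>C\<in>B. Pf a C) \<le> 16 * W^2 / 2^d"
  proof -
    have "(\<Sum>C\<in>B. Pf a C) \<le> (\<Sum>C\<in>cosets H. Pf a C)"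
    proof (rule sum_mono2)
      show "finite (cosets H)" by (simp add: cosets_def)
      show "B \<subseteq> cosets H" by (rule B(1))
      show "\<And>b. b \<in> cosets H - B \<Longrightarrow> 0 \<le> Pf a b" by (rule Pf_nonneg, rule a0)
    qed
    also have "\<dots> = Qf a H" by (rule sum_Pf[OF H])
    finally show ?thesis using Q unfolding a_def W_def by simp
  qed
  have part2: "(\<Sum>C\<in>B. r C) \<le> 5 * \<epsilon>^2 * W"
  proof (cases "W = 0")
    case True
    hence "a x = 0" for x using WA a0 by (simp add: sum_nonneg_eq_0_iff)
    hence "r C = 0" for C unfolding r_def by simp
    thus ?thesis using True by simp
  next
    case False
    hence Wp: "W > 0" using WA a0 by (metis sum_nonneg order_le_less)
    define L where "L = 3 * \<epsilon>^2 * W / real s"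
    have sp: "real s > 0" using s1 by simp
    have Lp: "L > 0" unfolding L_def using sp e Wp by simp
    have rb: "r C \<le> (Pf a C + L^2) / (2 * L)" if "C \<in> B" for C
    proof -
      have sq: "(r C - L)^2 = (r C)^2 + L^2 - 2 * (r C) * L" by (rule power2_diff)
      have "0 \<le> (r C - L)^2" by simp
      hence "2 * (r C) * L \<le> (r C)^2 + L^2" unfolding sq by linarith
      hence "2 * L * r C \<le> (r C)^2 + L^2" by (simp add: mult_ac)
      also have "\<dots> \<le> Pf a C + L^2" using rP[of C] that B(1) by auto
      finally show ?thesis using Lp by (simp add: field_simps)
    qed
    have "(\<Sum>C\<in>B. r C) \<le> (\<Sum>C\<in>B. (Pf a C + L^2) / (2 * L))" by (rule sum_mono) (rule rb)
    also have "\<dots> = ((\<Sum>C\<in>B. Pf a C) + real s * L^2) / (2 * L)"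
      using B(2) by (simp add: sum_divide_distrib[symmetric] sum.distrib)
    also have "\<dots> \<le> 5 * \<epsilon>^2 * W"
      by (rule final_arith[OF sp e Wp D L_def PB])
    finally show ?thesis .
  qed
  have "(\<Sum>i=1..s. coset_energy_sorted f H i - fourier_energy_sorted f i)
      = (\<Sum>i=1..s. coset_energy_sorted f H i) - (\<Sum>i=1..s. fourier_energy_sorted f i)"
    by (rule sum_subtractf)
  also have "\<dots> = (\<Sum>C\<in>B. a (bC C)) + (\<Sum>C\<in>B. r C) - (\<Sum>i=1..s. fourier_energy_sorted f i)"
    unfolding ysum using split B(1) by (simp add: sum.distrib[symmetric] subset_iff)
  also have "\<dots> \<le> 5 * \<epsilon>^2 * W" using part1 part2 by linarith
  finally show ?thesis unfolding W_def .
qed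

theorem corollary3p3:
  fixes f :: "'n::finite set \<Rightarrow> real" and s d :: nat and \<epsilon> :: real
  assumes "s \<ge> 1" and "0 < \<epsilon>" and "\<epsilon> \<le> 1/2"
    and "(2::real) ^ d = 2 * real s / \<epsilon> ^ 4"
    and "d \<le> CARD('n)"
  shows "measure_pmf.prob (pmf_of_set (subspaces_codim d))
           {H. (\<Sum>i=1..s. coset_energy_sorted f H i - fourier_energy_sorted f i)
               \<le> 5 * \<epsilon>^2 * norm2sq f} \<ge> 15/16"
proof -
  note s1 = assms(1) and e = assms(2) and e2 = assms(3) and D = assms(4) and dn = assms(5)
  define X where "X = (subspaces_codim d :: 'n set set set)"
  define Good where "Good = {H. (\<Sum>i=1..s. coset_energy_sorted f H i - fourier_energy_sorted f i)
               \<le> 5 * \<epsilon>^2 * norm2sq f}"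
  define a where "a = (\<lambda>\<alpha>. (fourier f \<alpha>)^2)"
  define W where "W = norm2sq f"
  define c where "c = 16 * W^2 / 2^d"
  define Bad where "Bad = {H\<in>X. c < Qf a H}"
  have a0: "a x \<ge> 0" for x unfolding a_def by simp
  have WA: "W = (\<Sum>\<alpha>\<in>UNIV. a \<alpha>)" unfolding W_def a_def by (simp add: parseval)
  have fX: "finite X" by simp
  have neX: "X \<noteq> {}" unfolding X_def by (rule codim_nonempty[OF dn])
  have cX: "card X > 0" using fX neX by (simp add: card_gt_0_iff)
  have sd: "s \<le> 2^d"
  proof -
    have "\<epsilon>^4 \<le> 1" using e e2 by (intro power_le_one) auto
    moreover have "\<epsilon>^4 > 0" using e by simp
    ultimately have "2 * real s / \<epsilon>^4 \<ge> 2 * real s"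
      by (simp add: le_divide_eq mult_left_le)
    hence "real s \<le> 2^d" using D by simp
    hence "real s \<le> real ((2::nat)^d)" by simp
    thus ?thesis by (simp only: of_nat_le_iff)
  qed
  have goodX: "X - Bad \<subseteq> X \<inter> Good"
  proof
    fix H assume H: "H \<in> X - Bad"
    hence "Qf a H \<le> c" unfolding Bad_def by auto
    hence "H \<in> Good" unfolding Good_def c_def W_def a_def
      using deterministic[OF s1 sd e D] H unfolding X_def by blast
    thus "H \<in> X \<inter> Good" using H by blast
  qed
  have badc: "real (card Bad) * 16 \<le> real (card X)"
  proof (cases "W = 0")
    case True
    hence az: "a x = 0" for x using WA a0 by (simp add: sum_nonneg_eq_0_iff)
    have "Qf a H = 0" for H unfolding Qf_def az by (intro sum.neutral ballI) simp
    moreover have "c \<ge> 0" unfolding c_def by (intro divide_nonneg_pos) auto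
    ultimately have "Bad = {}" unfolding Bad_def by auto
    thus ?thesis by simp
  next
    case False
    hence c0: "c > 0" unfolding c_def by simp
    have fB: "finite Bad" by simp
    have "real (card Bad) * c = (\<Sum>H\<in>Bad. c)" by simp
    also have "\<dots> \<le> (\<Sum>H\<in>Bad. Qf a H)" by (rule sum_mono) (simp add: Bad_def less_imp_le)
    also have "\<dots> \<le> (\<Sum>H\<in>X. Qf a H)"
      by (rule sum_mono2[OF fX]) (auto simp: Bad_def intro: Qf_nonneg a0)
    also have "\<dots> \<le> real (card X) / 2^d * W^2"
      unfolding X_def WA by (rule sum_Qf[OF a0 dn])
    also have "\<dots> = c * real (card X) / 16" unfolding c_def by simp
    finally have "real (card Bad) * c \<le> c * real (card X) / 16" .
    thus ?thesis using c0 by (simp add: field_simps)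
  qed
  have "measure_pmf.prob (pmf_of_set X) Good = real (card (X \<inter> Good)) / real (card X)"
    by (rule measure_pmf_of_set[OF neX fX])
  also have "\<dots> \<ge> real (card (X - Bad)) / real (card X)"
    using card_mono[OF _ goodX] fX cX by (intro divide_right_mono) auto
  moreover have "real (card (X - Bad)) / real (card X) \<ge> 15/16"
  proof -
    have eq: "real (card (X - Bad)) = real (card X) - real (card Bad)"
      by (simp add: Bad_def card_Diff_subset of_nat_diff card_mono)
    show ?thesis unfolding eq using badc cX by (simp add: field_simps)
  qed
  ultimately have "measure_pmf.prob (pmf_of_set X) Good \<ge> 15/16" by linarith
  thus ?thesis unfolding X_def Good_def .
qed

end
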